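(* Let $X$ be a real Banach space and $\alpha>0$; put $X_\alpha=X\setminus\alpha B_X$. The following statements are equivalent. (1) $X$ is UR. (2) $r(Q_{S_X}(x,\frac1n),Q_{S_X}(x',\frac1n))\to\left\|\frac{x}{\|x\|}-\frac{x'}{\|x'\|}\right\|$ uniformly on $X_\alpha\times X_\alpha$, i.e. $\sup_{x,x'\in X_\alpha}\left|r(Q_{S_X}(x,\frac1n),Q_{S_X}(x',\frac1n))-\left\|\frac{x}{\|x\|}-\frac{x'}{\|x'\|}\right\|\right|\to0$. (3) $\sup_{x\in X_\alpha}\mathrm{diam}(Q_{S_X}(x,\frac1n))\to0$. (4) $Q_{S_X}(x)=\{-\frac{x}{\|x\|}\}$ for every $x\in X_\alpha$ and $\sup_{x\in X_\alpha}H(Q_{S_X}(x,\frac1n),Q_{S_X}(x))\to0$. (5) $S_X$ is USUR on $X_\alpha$.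
   Context: $B_X,S_X$ are the closed unit ball and unit sphere of $X$. For non-empty bounded $F$, $x\in X$, $\delta\ge0$: $r(F,x)=\sup_{y\in F}\|x-y\|$, $Q_F(x,\delta)=\{y\in F:\|x-y\|\ge r(F,x)-\delta\}$, $Q_F(x)=Q_F(x,0)$. $F$ is USUR (uniformly strongly uniquely remotal) on $A$ if $Q_F(x)$ is a singleton for every $x\in A$ and for every $\epsilon>0$ there is $\delta>0$ such that $Q_F(x,\delta)\subseteq Q_F(x)+\epsilon B_X$ for every $x\in A$. For non-empty bounded $A,B$: $r(A,B)=\sup\{\|a-b\|:a\in A,b\in B\}$ and $H(A,B)=\inf\{r>0:A\subseteq B+rB_X, B\subseteq A+rB_X\}$ (Hausdorff distance). $X$ is UR if $\|x_n-y_n\|\to0$ whenever $(x_n),(y_n)\subseteq S_X$ with $\|\frac{x_n+y_n}{2}\|\to1$. *)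

theory Defs
  imports "HOL-Analysis.Analysis"
begin

definition rad :: "'a::real_normed_vector set \<Rightarrow> 'a \<Rightarrow> real" where
  "rad F x = (SUP y\<in>F. norm (x - y))"

definition farQ :: "'a::real_normed_vector set \<Rightarrow> 'a \<Rightarrow> real \<Rightarrow> 'a set" where
  "farQ F x \<delta> = {y \<in> F. rad F x - \<delta> \<le> norm (x - y)}"

definition farQ0 :: "'a::real_normed_vector set \<Rightarrow> 'a \<Rightarrow> 'a set" where
  "farQ0 F x = farQ F x 0"

definition enlarge :: "'a::real_normed_vector set \<Rightarrow> real \<Rightarrow> 'a set" where
  "enlarge A r = {a + v |a v. a \<in> A \<and> norm v \<le> r}"

definition USUR :: "'a::real_normed_vector set \<Rightarrow> 'a set \<Rightarrow> bool" where
  "USUR F A \<longleftrightarrow>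
     (\<forall>x\<in>A. \<exists>y. farQ0 F x = {y}) \<and>
     (\<forall>\<epsilon>>0. \<exists>\<delta>>0. \<forall>x\<in>A. farQ F x \<delta> \<subseteq> enlarge (farQ0 F x) \<epsilon>)"

definition rad_sets :: "'a::real_normed_vector set \<Rightarrow> 'a set \<Rightarrow> real" where
  "rad_sets A B = Sup {norm (a - b) |a b. a \<in> A \<and> b \<in> B}"

definition hausd :: "'a::real_normed_vector set \<Rightarrow> 'a set \<Rightarrow> real" where
  "hausd A B = Inf {r. r > 0 \<and> A \<subseteq> enlarge B r \<and> B \<subseteq> enlarge A r}"

definition UR :: "'a::real_normed_vector itself \<Rightarrow> bool" where
  "UR (TYPE('a)) \<longleftrightarrow>
     (\<forall>x y :: nat \<Rightarrow> 'a. (\<forall>n. norm (x n) = 1 \<and> norm (y n) = 1) \<longrightarrow>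
        (\<lambda>n. norm ((1/2) *\<^sub>R (x n + y n))) \<longlonglongrightarrow> 1 \<longrightarrow>
        (\<lambda>n. norm (x n - y n)) \<longlonglongrightarrow> 0)"

end

theory Submission imports Defs begin

lemma rad_sphere:
  fixes x :: "'a::real_normed_vector"
  assumes "x \<noteq> 0"
  shows "rad (sphere 0 1) x = norm x + 1"
proof -
  let ?u = "x /\<^sub>R norm x"
  have nx: "norm x > 0" using assms by simp
  have mem: "- ?u \<in> sphere 0 1" using assms by simp
  have eq: "norm (x - (- ?u)) = norm x + 1"
  proof -
    have "x - (- ?u) = (1 + 1 / norm x) *\<^sub>R x" by (simp add: algebra_simps divide_inverse)
    then have "norm (x - (- ?u)) = (1 + 1 / norm x) * norm x" using nx by simp
    then show ?thesis using nx by (simp add: field_simps)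
  qed
  have le: "\<And>y. y \<in> sphere 0 1 \<Longrightarrow> norm (x - y) \<le> norm x + 1"
    using norm_triangle_ineq4 by (metis mem_sphere_0)
  show ?thesis unfolding rad_def
    apply (rule cSup_eq_maximum)
    using mem eq le by (force intro: image_eqI[where x="- ?u"])+
qed

lemma memQ:
  fixes x :: "'a::real_normed_vector"
  assumes "x \<noteq> 0"
  shows "y \<in> farQ (sphere 0 1) x d \<longleftrightarrow> norm y = 1 \<and> norm x + 1 - d \<le> norm (x - y)"
  using rad_sphere[OF assms] unfolding farQ_def by auto

lemma negu_in:
  fixes x :: "'a::real_normed_vector"
  assumes "x \<noteq> 0" "0 \<le> d"
  shows "- (x /\<^sub>R norm x) \<in> farQ (sphere 0 1) x d"
proof -
  have nx: "norm x > 0" using assms by simp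
  have "x - (- (x /\<^sub>R norm x)) = (1 + 1 / norm x) *\<^sub>R x" by (simp add: algebra_simps divide_inverse)
  then have "norm (x - (- (x /\<^sub>R norm x))) = (1 + 1 / norm x) * norm x" using nx by simp
  then have "norm (x - (- (x /\<^sub>R norm x))) = norm x + 1" using nx by (simp add: field_simps)
  then show ?thesis using assms by (simp add: memQ)
qed

lemma Q_mono: "d \<le> d' \<Longrightarrow> farQ F x d \<subseteq> farQ F x d'"
  unfolding farQ_def by auto

lemma UR_UM:
  assumes "UR TYPE('a::real_normed_vector)"
  shows "\<forall>\<epsilon>>0. \<exists>\<eta>>0. \<forall>a b::'a. norm a = 1 \<longrightarrow> norm b = 1 \<longrightarrow> 2 - \<eta> \<le> norm (a + b) \<longrightarrow> norm (a - b) \<le> \<epsilon>"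
proof (rule ccontr)
  assume "\<not> ?thesis"
  then obtain \<epsilon> where e: "\<epsilon> > 0" and H: "\<And>\<eta>. \<eta> > 0 \<Longrightarrow> \<exists>a b::'a. norm a = 1 \<and> norm b = 1 \<and> 2 - \<eta> \<le> norm (a + b) \<and> \<not> norm (a - b) \<le> \<epsilon>"
    by auto
  have "\<forall>n. \<exists>a b::'a. norm a = 1 \<and> norm b = 1 \<and> 2 - inverse (real (Suc n)) \<le> norm (a + b) \<and> \<not> norm (a - b) \<le> \<epsilon>"
    using H by simp
  then obtain A B :: "nat \<Rightarrow> 'a" where AB: "\<And>n. norm (A n) = 1 \<and> norm (B n) = 1 \<and> 2 - inverse (real (Suc n)) \<le> norm (A n + B n) \<and> \<not> norm (A n - B n) \<le> \<epsilon>"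
    by metis
  have lo: "(\<lambda>n. 1 + - (inverse (real (Suc n)) / 2)) \<longlonglongrightarrow> 1"
  proof -
    have "(\<lambda>n. 1 + - (inverse (real (Suc n)) / 2)) \<longlonglongrightarrow> 1 + - (0 / 2)"
      by (intro tendsto_intros LIMSEQ_inverse_real_of_nat) simp
    then show ?thesis by simp
  qed
  have "(\<lambda>n. norm ((1/2) *\<^sub>R (A n + B n))) \<longlonglongrightarrow> 1"
  proof (rule tendsto_sandwich[OF _ _ lo tendsto_const])
    show "\<forall>\<^sub>F n in sequentially. 1 + - (inverse (real (Suc n)) / 2) \<le> norm ((1/2) *\<^sub>R (A n + B n))"
      using AB by (auto intro!: always_eventually)
    show "\<forall>\<^sub>F n in sequentially. norm ((1/2) *\<^sub>R (A n + B n)) \<le> 1"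
    proof (intro always_eventually allI)
      fix n
      have "norm (A n + B n) \<le> 2" using norm_triangle_ineq[of "A n" "B n"] AB[of n] by simp
      then show "norm ((1/2) *\<^sub>R (A n + B n)) \<le> 1" by simp
    qed
  qed
  then have "(\<lambda>n. norm (A n - B n)) \<longlonglongrightarrow> 0"
    using assms AB unfolding UR_def by blast
  then have "\<forall>\<^sub>F n in sequentially. norm (A n - B n) < \<epsilon>"
    using e by (rule order_tendstoD)
  then obtain n where "norm (A n - B n) < \<epsilon>" using eventually_sequentially by auto
  then show False using AB[of n] by simp
qed

lemma UM_UR:
  assumes "\<forall>\<epsilon>>0. \<exists>\<eta>>0. \<forall>a b::'a::real_normed_vector. norm a = 1 \<longrightarrow> norm b = 1 \<longrightarrow> 2 - \<eta> \<le> norm (a + b) \<longrightarrow> norm (a - b) \<le> \<epsilon>"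
  shows "UR TYPE('a)"
  unfolding UR_def
proof (intro allI impI)
  fix x y :: "nat \<Rightarrow> 'a"
  assume n1: "\<forall>n. norm (x n) = 1 \<and> norm (y n) = 1"
    and lim: "(\<lambda>n. norm ((1/2) *\<^sub>R (x n + y n))) \<longlonglongrightarrow> 1"
  show "(\<lambda>n. norm (x n - y n)) \<longlonglongrightarrow> 0"
  proof (rule LIMSEQ_I)
    fix r :: real assume r: "0 < r"
    then obtain \<eta> where eta: "\<eta> > 0" and H: "\<forall>a b::'a. norm a = 1 \<longrightarrow> norm b = 1 \<longrightarrow> 2 - \<eta> \<le> norm (a + b) \<longrightarrow> norm (a - b) \<le> r/2"
      using assms by (meson half_gt_zero)
    obtain N where N: "\<forall>n\<ge>N. norm (norm ((1/2) *\<^sub>R (x n + y n)) - 1) < \<eta>/2"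
      using LIMSEQ_D[OF lim, of "\<eta>/2"] eta by auto
    have "\<forall>n\<ge>N. norm (norm (x n - y n) - 0) < r"
    proof (intro allI impI)
      fix n assume "n \<ge> N"
      then have "\<bar>norm (x n + y n) / 2 - 1\<bar> < \<eta>/2" using N by simp
      then have "2 - \<eta> \<le> norm (x n + y n)" by linarith
      then have "norm (x n - y n) \<le> r/2" using H n1 by blast
      then show "norm (norm (x n - y n) - 0) < r" using r by simp
    qed
    then show "\<exists>no. \<forall>n\<ge>no. norm (norm (x n - y n) - 0) < r" by blast
  qed
qed

lemma UM_P3:
  fixes \<alpha> :: real
  assumes a: "\<alpha> > 0"
    and UM: "\<forall>\<epsilon>>0. \<exists>\<eta>>0. \<forall>a b::'a::real_normed_vector. norm a = 1 \<longrightarrow> norm b = 1 \<longrightarrow> 2 - \<eta> \<le> norm (a + b) \<longrightarrow> norm (a - b) \<le> \<epsilon>"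
  shows "\<forall>\<epsilon>>0. \<exists>\<delta>>0. \<forall>x::'a. \<alpha> < norm x \<longrightarrow> (\<forall>y\<in>farQ (sphere 0 1) x \<delta>. norm (y + x /\<^sub>R norm x) \<le> \<epsilon>)"
proof (intro allI impI)
  fix \<epsilon> :: real assume e: "\<epsilon> > 0"
  then obtain \<eta> where eta: "\<eta> > 0" and H: "\<forall>a b::'a. norm a = 1 \<longrightarrow> norm b = 1 \<longrightarrow> 2 - \<eta> \<le> norm (a + b) \<longrightarrow> norm (a - b) \<le> \<epsilon>"
    using UM by blast
  define \<delta> where "\<delta> = \<eta> * min 1 \<alpha>"
  have dpos: "\<delta> > 0" using eta a by (simp add: \<delta>_def)
  have d1: "\<delta> \<le> \<eta>" using eta by (simp add: \<delta>_def mult_left_le)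
  have d2: "\<delta> \<le> \<eta> * \<alpha>" using eta by (simp add: \<delta>_def)
  have "\<forall>x::'a. \<alpha> < norm x \<longrightarrow> (\<forall>y\<in>farQ (sphere 0 1) x \<delta>. norm (y + x /\<^sub>R norm x) \<le> \<epsilon>)"
  proof (intro allI impI ballI)
    fix x y :: 'a
    assume xa: "\<alpha> < norm x" and yQ: "y \<in> farQ (sphere 0 1) x \<delta>"
    define u where "u = x /\<^sub>R norm x"
    have nx: "norm x > 0" using xa a by linarith
    have x0: "x \<noteq> 0" using nx by auto
    have nu: "norm u = 1" using x0 by (simp add: u_def)
    have ny: "norm y = 1" and yd: "norm x + 1 - \<delta> \<le> norm (x - y)" using yQ memQ[OF x0] by auto
    have xu: "x = norm x *\<^sub>R u" using nx by (simp add: u_def)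
    have key: "2 - \<eta> \<le> norm (u + (- y))"
    proof (cases "norm x \<ge> 1")
      case True
      have "x - y = (u - y) + (norm x - 1) *\<^sub>R u"
        by (subst xu) (simp add: algebra_simps)
      then have "norm (x - y) \<le> norm (u - y) + norm ((norm x - 1) *\<^sub>R u)"
        by (metis norm_triangle_ineq)
      also have "norm ((norm x - 1) *\<^sub>R u) = norm x - 1" using True nu by simp
      finally show ?thesis using yd d1 by simp
    next
      case False
      have "x - y = norm x *\<^sub>R (u - y) - (1 - norm x) *\<^sub>R y"
        by (subst xu) (simp add: algebra_simps)
      then have "norm (x - y) \<le> norm (norm x *\<^sub>R (u - y)) + norm ((1 - norm x) *\<^sub>R y)"
        by (metis norm_triangle_ineq4)
      also have "norm ((1 - norm x) *\<^sub>R y) = 1 - norm x" using False ny by simp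
      also have "norm (norm x *\<^sub>R (u - y)) = norm x * norm (u - y)" by simp
      finally have "2 * norm x - \<delta> \<le> norm x * norm (u - y)" using yd by simp
      moreover have "\<eta> * \<alpha> \<le> \<eta> * norm x" using xa eta by simp
      ultimately have "norm x * (2 - \<eta>) \<le> norm x * norm (u - y)" using d2 by (simp add: algebra_simps)
      then show ?thesis using nx by simp
    qed
    have "norm (u - (- y)) \<le> \<epsilon>" using H[rule_format, of u "- y"] nu ny key by simp
    then show "norm (y + x /\<^sub>R norm x) \<le> \<epsilon>" by (simp add: u_def add.commute)
  qed
  then show "\<exists>\<delta>>0. \<forall>x::'a. \<alpha> < norm x \<longrightarrow> (\<forall>y\<in>farQ (sphere 0 1) x \<delta>. norm (y + x /\<^sub>R norm x) \<le> \<epsilon>)"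
    using dpos by blast
qed

lemma D_UM:
  fixes \<alpha> :: real
  assumes a: "\<alpha> > 0"
    and D: "\<forall>\<epsilon>>0. \<exists>\<delta>>0. \<forall>x::'a::real_normed_vector. \<alpha> < norm x \<longrightarrow> (\<forall>y\<in>farQ (sphere 0 1) x \<delta>. \<forall>y'\<in>farQ (sphere 0 1) x \<delta>. norm (y - y') \<le> \<epsilon>)"
  shows "\<forall>\<epsilon>>0. \<exists>\<eta>>0. \<forall>a b::'a. norm a = 1 \<longrightarrow> norm b = 1 \<longrightarrow> 2 - \<eta> \<le> norm (a + b) \<longrightarrow> norm (a - b) \<le> \<epsilon>"
proof (intro allI impI)
  fix \<epsilon> :: real assume e: "\<epsilon> > 0"
  then obtain \<delta> where dpos: "\<delta> > 0" and HD: "\<forall>x::'a. \<alpha> < norm x \<longrightarrow> (\<forall>y\<in>farQ (sphere 0 1) x \<delta>. \<forall>y'\<in>farQ (sphere 0 1) x \<delta>. norm (y - y') \<le> \<epsilon>)"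
    using D by blast
  define m where "m = \<alpha> + 1"
  define \<eta> where "\<eta> = min 1 \<delta>"
  have "\<forall>a b::'a. norm a = 1 \<longrightarrow> norm b = 1 \<longrightarrow> 2 - \<eta> \<le> norm (a + b) \<longrightarrow> norm (a - b) \<le> \<epsilon>"
  proof (intro allI impI)
    fix a b :: 'a
    assume na: "norm a = 1" and nb: "norm b = 1" and ab: "2 - \<eta> \<le> norm (a + b)"
    have ab1: "1 \<le> norm (a + b)" using ab by (simp add: \<eta>_def)
    have ab2: "2 - \<delta> \<le> norm (a + b)" using ab by (simp add: \<eta>_def)
    define w where "w = - (m *\<^sub>R (a + b))"
    have mpos: "m > 0" using a by (simp add: m_def)
    have nw: "norm w = m * norm (a + b)" using mpos by (simp add: w_def)
    have wa: "\<alpha> < norm w"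
    proof -
      have "m * 1 \<le> m * norm (a + b)" using ab1 mpos by simp
      then show ?thesis using nw by (simp add: m_def)
    qed
    then have w0: "w \<noteq> 0" using a by auto
    have aQ: "a \<in> farQ (sphere 0 1) w \<delta>"
    proof -
      have "w - a = - ((m + 1) *\<^sub>R (a + b) - b)" by (simp add: w_def algebra_simps)
      then have "norm (w - a) = norm ((m + 1) *\<^sub>R (a + b) - b)" by (metis norm_minus_cancel)
      moreover have "norm ((m + 1) *\<^sub>R (a + b)) - norm b \<le> norm ((m + 1) *\<^sub>R (a + b) - b)"
        by (rule norm_triangle_ineq2)
      moreover have "norm ((m + 1) *\<^sub>R (a + b)) = (m + 1) * norm (a + b)" using mpos by simp
      ultimately have "(m + 1) * norm (a + b) - 1 \<le> norm (w - a)" using nb by linarith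
      then have "norm w + 1 - \<delta> \<le> norm (w - a)" using nw ab2 by (simp add: algebra_simps)
      then show ?thesis using memQ[OF w0] na by simp
    qed
    have bQ: "b \<in> farQ (sphere 0 1) w \<delta>"
    proof -
      have "w - b = - ((m + 1) *\<^sub>R (a + b) - a)" by (simp add: w_def algebra_simps)
      then have "norm (w - b) = norm ((m + 1) *\<^sub>R (a + b) - a)" by (metis norm_minus_cancel)
      moreover have "norm ((m + 1) *\<^sub>R (a + b)) - norm a \<le> norm ((m + 1) *\<^sub>R (a + b) - a)"
        by (rule norm_triangle_ineq2)
      moreover have "norm ((m + 1) *\<^sub>R (a + b)) = (m + 1) * norm (a + b)" using mpos by simp
      ultimately have "(m + 1) * norm (a + b) - 1 \<le> norm (w - b)" using na by linarith
      then have "norm w + 1 - \<delta> \<le> norm (w - b)" using nw ab2 by (simp add: algebra_simps)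
      then show ?thesis using memQ[OF w0] nb by simp
    qed
    show "norm (a - b) \<le> \<epsilon>" using HD wa aQ bQ by blast
  qed
  moreover have "\<eta> > 0" using dpos by (simp add: \<eta>_def)
  ultimately show "\<exists>\<eta>>0. \<forall>a b::'a. norm a = 1 \<longrightarrow> norm b = 1 \<longrightarrow> 2 - \<eta> \<le> norm (a + b) \<longrightarrow> norm (a - b) \<le> \<epsilon>"
    by blast
qed

lemma enl_single: "y \<in> enlarge {c} r \<longleftrightarrow> norm (y - c) \<le> r"
  unfolding enlarge_def by (auto intro!: exI[where x="y - c"])

lemma in_enl: "c \<in> A \<Longrightarrow> 0 \<le> r \<Longrightarrow> c \<in> enlarge A r"
  unfolding enlarge_def by force

lemma hausd_single_le:
  fixes c :: "'a::real_normed_vector"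
  assumes "c \<in> A" "\<forall>y\<in>A. norm (y - c) \<le> r" "r > 0"
  shows "hausd A {c} \<le> r"
proof -
  have 1: "A \<subseteq> enlarge {c} r" using assms(2) enl_single by blast
  have 2: "{c} \<subseteq> enlarge A r" using in_enl[of c A r] assms by auto
  have "r \<in> {r. r > 0 \<and> A \<subseteq> enlarge {c} r \<and> {c} \<subseteq> enlarge A r}"
    using 1 2 assms(3) by blast
  then show ?thesis unfolding hausd_def by (intro cInf_lower) (auto intro: bdd_belowI[where m=0])
qed

lemma hausd_single_D:
  fixes c :: "'a::real_normed_vector"
  assumes "c \<in> A" "A \<subseteq> sphere 0 1" "hausd A {c} < s"
  shows "\<exists>r<s. \<forall>y\<in>A. norm (y - c) \<le> r"
proof -
  let ?R = "{r. r > 0 \<and> A \<subseteq> enlarge {c} r \<and> {c} \<subseteq> enlarge A r}"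
  have "2 \<in> ?R"
  proof -
    have "\<forall>y\<in>A. norm (y - c) \<le> 2"
    proof
      fix y assume "y \<in> A"
      then have "norm y = 1" "norm c = 1" using assms by auto
      then show "norm (y - c) \<le> 2" using norm_triangle_ineq4[of y c] by simp
    qed
    then have 1: "A \<subseteq> enlarge {c} 2" using enl_single by blast
    have 2: "{c} \<subseteq> enlarge A 2" using in_enl[of c A 2] assms by auto
    show ?thesis using 1 2 by simp
  qed
  then have ne: "?R \<noteq> {}" by blast
  have "Inf ?R < s" using assms(3) unfolding hausd_def .
  then obtain r where r: "r \<in> ?R" "r < s" using cInf_lessD[OF ne] by blast
  then have "A \<subseteq> enlarge {c} r" by blast
  then have "\<forall>y\<in>A. norm (y - c) \<le> r" using enl_single by blast
  then show ?thesis using r(2) by blast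
qed

lemma Nfrom:
  fixes \<delta> :: real
  assumes "\<delta> > 0"
  shows "\<exists>N. \<forall>n\<ge>N. 0 < 1 / real n \<and> 1 / real n \<le> \<delta>"
proof -
  obtain N :: nat where N: "inverse (real (Suc N)) < \<delta>" using reals_Archimedean assms by blast
  have "\<forall>n\<ge>Suc N. 0 < 1 / real n \<and> 1 / real n \<le> \<delta>"
  proof (intro allI impI)
    fix n assume "n \<ge> Suc N"
    then have "inverse (real n) \<le> inverse (real (Suc N))" by (intro le_imp_inverse_le) auto
    then have "inverse (real n) \<le> \<delta>" using N by linarith
    then show "0 < 1 / real n \<and> 1 / real n \<le> \<delta>" using \<open>n \<ge> Suc N\<close> by (simp add: divide_inverse)
  qed
  then show ?thesis by blast
qed

lemma tri2:
  fixes y y' u :: "'a::real_normed_vector"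
  assumes "norm (y + u) \<le> r" "norm (y' + u) \<le> r'"
  shows "norm (y - y') \<le> r + r'"
proof -
  have "y - y' = (y + u) - (y' + u)" by simp
  then have "norm (y - y') \<le> norm (y + u) + norm (y' + u)" by (metis norm_triangle_ineq4)
  then show ?thesis using assms by simp
qed

lemma tri3:
  fixes a b u u' :: "'a::real_normed_vector"
  shows "norm (a - b) \<le> norm (a + u) + norm (u - u') + norm (b + u')"
proof -
  have "a - b = ((a + u) - (u - u')) - (b + u')" by (simp add: algebra_simps)
  then have "norm (a - b) \<le> norm ((a + u) - (u - u')) + norm (b + u')" by (metis norm_triangle_ineq4)
  moreover have "norm ((a + u) - (u - u')) \<le> norm (a + u) + norm (u - u')" by (rule norm_triangle_ineq4)
  ultimately show ?thesis by simp
qed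


theorem theorem3p9:
  fixes \<alpha> :: real
  assumes "\<alpha> > 0"
  defines "S \<equiv> sphere (0::'a::banach) 1"
      and "X\<alpha> \<equiv> {x::'a. \<alpha> < norm x}"
  shows
   "(UR TYPE('a) \<longleftrightarrow>
      (\<forall>\<epsilon>>0. \<exists>N. \<forall>n\<ge>N. \<forall>x\<in>X\<alpha>. \<forall>x'\<in>X\<alpha>.
         \<bar>rad_sets (farQ S x (1 / real n)) (farQ S x' (1 / real n))
            - norm (x /\<^sub>R norm x - x' /\<^sub>R norm x')\<bar> \<le> \<epsilon>)) \<and>
    (UR TYPE('a) \<longleftrightarrow>
      (\<forall>\<epsilon>>0. \<exists>N. \<forall>n\<ge>N. \<forall>x\<in>X\<alpha>. diameter (farQ S x (1 / real n)) \<le> \<epsilon>)) \<and>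
    (UR TYPE('a) \<longleftrightarrow>
      (\<forall>x\<in>X\<alpha>. farQ0 S x = {- (x /\<^sub>R norm x)}) \<and>
      (\<forall>\<epsilon>>0. \<exists>N. \<forall>n\<ge>N. \<forall>x\<in>X\<alpha>. hausd (farQ S x (1 / real n)) (farQ0 S x) \<le> \<epsilon>)) \<and>
    (UR TYPE('a) \<longleftrightarrow> USUR S X\<alpha>)"
proof -
  note a = assms(1)
  define P where "P = (\<forall>\<epsilon>>0. \<exists>\<delta>>0. \<forall>x::'a. \<alpha> < norm x \<longrightarrow> (\<forall>y\<in>farQ S x \<delta>. norm (y + x /\<^sub>R norm x) \<le> \<epsilon>))"
  define D where "D = (\<forall>\<epsilon>>0. \<exists>\<delta>>0. \<forall>x::'a. \<alpha> < norm x \<longrightarrow> (\<forall>y\<in>farQ S x \<delta>. \<forall>y'\<in>farQ S x \<delta>. norm (y - y') \<le> \<epsilon>))"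
  have x0: "\<And>x::'a. x \<in> X\<alpha> \<Longrightarrow> x \<noteq> 0" using a unfolding X\<alpha>_def by auto
  have QS: "\<And>x d. farQ S x d \<subseteq> S" unfolding farQ_def by auto
  have nu: "\<And>x d. x \<in> X\<alpha> \<Longrightarrow> 0 \<le> d \<Longrightarrow> - (x /\<^sub>R norm x) \<in> farQ S x d"
    unfolding S_def using x0 negu_in by blast
  have P_D: "P \<Longrightarrow> D"
    unfolding D_def
  proof (intro allI impI)
    fix \<epsilon> :: real assume P and e: "\<epsilon> > 0"
    then obtain \<delta> where d: "\<delta> > 0" and H: "\<forall>x::'a. \<alpha> < norm x \<longrightarrow> (\<forall>y\<in>farQ S x \<delta>. norm (y + x /\<^sub>R norm x) \<le> \<epsilon>/2)"
      unfolding P_def by (meson half_gt_zero)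
    have "\<forall>x::'a. \<alpha> < norm x \<longrightarrow> (\<forall>y\<in>farQ S x \<delta>. \<forall>y'\<in>farQ S x \<delta>. norm (y - y') \<le> \<epsilon>)"
    proof (intro allI impI ballI)
      fix x y y' assume "\<alpha> < norm x" "y \<in> farQ S x \<delta>" "y' \<in> farQ S x \<delta>"
      then have 1: "norm (y + x /\<^sub>R norm x) \<le> \<epsilon>/2" "norm (y' + x /\<^sub>R norm x) \<le> \<epsilon>/2" using H by auto
      have "y - y' = (y + x /\<^sub>R norm x) - (y' + x /\<^sub>R norm x)" by simp
      then have "norm (y - y') \<le> norm (y + x /\<^sub>R norm x) + norm (y' + x /\<^sub>R norm x)"
        by (metis norm_triangle_ineq4)
      then show "norm (y - y') \<le> \<epsilon>" using 1 by simp
    qed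
    then show "\<exists>\<delta>>0. \<forall>x::'a. \<alpha> < norm x \<longrightarrow> (\<forall>y\<in>farQ S x \<delta>. \<forall>y'\<in>farQ S x \<delta>. norm (y - y') \<le> \<epsilon>)"
      using d by blast
  qed
  have D_P: "D \<Longrightarrow> P"
    unfolding P_def
  proof (intro allI impI)
    fix \<epsilon> :: real assume D and e: "\<epsilon> > 0"
    then obtain \<delta> where d: "\<delta> > 0" and H: "\<forall>x::'a. \<alpha> < norm x \<longrightarrow> (\<forall>y\<in>farQ S x \<delta>. \<forall>y'\<in>farQ S x \<delta>. norm (y - y') \<le> \<epsilon>)"
      unfolding D_def by blast
    have "\<forall>x::'a. \<alpha> < norm x \<longrightarrow> (\<forall>y\<in>farQ S x \<delta>. norm (y + x /\<^sub>R norm x) \<le> \<epsilon>)"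
    proof (intro allI impI ballI)
      fix x y assume xa: "\<alpha> < norm x" and y: "y \<in> farQ S x \<delta>"
      have "- (x /\<^sub>R norm x) \<in> farQ S x \<delta>" using nu[of x \<delta>] xa d unfolding X\<alpha>_def by auto
      then have "norm (y - - (x /\<^sub>R norm x)) \<le> \<epsilon>" using H xa y by blast
      then show "norm (y + x /\<^sub>R norm x) \<le> \<epsilon>" by simp
    qed
    then show "\<exists>\<delta>>0. \<forall>x::'a. \<alpha> < norm x \<longrightarrow> (\<forall>y\<in>farQ S x \<delta>. norm (y + x /\<^sub>R norm x) \<le> \<epsilon>)"
      using d by blast
  qed
  have UR_P: "UR TYPE('a) \<longleftrightarrow> P"
  proof
    assume "UR TYPE('a)"
    then show P unfolding P_def S_def using UM_P3[OF a UR_UM] by blast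
  next
    assume P
    then have D using P_D by blast
    then show "UR TYPE('a)" using UM_UR D_UM[OF a] unfolding D_def S_def by blast
  qed
  have UR_D: "UR TYPE('a) \<longleftrightarrow> D" using UR_P P_D D_P by blast
  have PN: "\<exists>N. \<forall>n\<ge>N. 0 < 1 / real n \<and> (\<forall>x\<in>X\<alpha>. \<forall>y\<in>farQ S x (1 / real n). norm (y + x /\<^sub>R norm x) \<le> \<epsilon>)"
    if hP: P and he: "\<epsilon> > 0" for \<epsilon>
  proof -
    obtain \<delta> where d: "\<delta> > 0" and H: "\<forall>x::'a. \<alpha> < norm x \<longrightarrow> (\<forall>y\<in>farQ S x \<delta>. norm (y + x /\<^sub>R norm x) \<le> \<epsilon>)"
      using hP he unfolding P_def by blast
    obtain N where N: "\<forall>n\<ge>N. 0 < 1 / real n \<and> 1 / real n \<le> \<delta>" using Nfrom[OF d] by blast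
    have "\<forall>n\<ge>N. 0 < 1 / real n \<and> (\<forall>x\<in>X\<alpha>. \<forall>y\<in>farQ S x (1 / real n). norm (y + x /\<^sub>R norm x) \<le> \<epsilon>)"
    proof (intro allI impI conjI ballI)
      fix n x y assume n: "n \<ge> N" and x: "x \<in> X\<alpha>" and y: "y \<in> farQ S x (1 / real n)"
      then have "y \<in> farQ S x \<delta>" using N Q_mono by blast
      then show "norm (y + x /\<^sub>R norm x) \<le> \<epsilon>" using H x unfolding X\<alpha>_def by blast
    qed (use N in auto)
    then show ?thesis by blast
  qed
  have Q0eq: "farQ0 S x = {- (x /\<^sub>R norm x)}" if P "x \<in> X\<alpha>" for x
  proof
    have "- (x /\<^sub>R norm x) \<in> farQ S x 0" using nu[OF that(2)] by simp
    then show "{- (x /\<^sub>R norm x)} \<subseteq> farQ0 S x" unfolding farQ0_def by simp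
    show "farQ0 S x \<subseteq> {- (x /\<^sub>R norm x)}"
    proof
      fix y assume y: "y \<in> farQ0 S x"
      have "norm (y + x /\<^sub>R norm x) \<le> \<epsilon>" if e: "\<epsilon> > 0" for \<epsilon>
      proof -
        obtain \<delta> where d: "\<delta> > 0" and H: "\<forall>x::'a. \<alpha> < norm x \<longrightarrow> (\<forall>y\<in>farQ S x \<delta>. norm (y + x /\<^sub>R norm x) \<le> \<epsilon>)"
          using \<open>P\<close> e unfolding P_def by blast
        have "y \<in> farQ S x \<delta>" using y Q_mono[of 0 \<delta>] d unfolding farQ0_def by auto
        then show ?thesis using H \<open>x \<in> X\<alpha>\<close> unfolding X\<alpha>_def by blast
      qed
      then have "norm (y + x /\<^sub>R norm x) \<le> 0" by (meson dense not_le)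
      then have "y + x /\<^sub>R norm x = 0" by simp
      then show "y \<in> {- (x /\<^sub>R norm x)}" by (simp add: eq_neg_iff_add_eq_0)
    qed
  qed
  have bS0: "bounded S" unfolding S_def by (rule bounded_subset[OF bounded_cball sphere_cball])
  have bS: "bounded (farQ S x d)" for x d using bounded_subset[OF bS0 QS] .
  have n2: "norm (a - b) \<le> 2" if "a \<in> farQ S x d" "b \<in> farQ S x' d'" for a b x x' d d'
  proof -
    have "a \<in> S" "b \<in> S" using that QS by blast+
    then have "norm a = 1" "norm b = 1" by (simp_all add: S_def)
    then show ?thesis using norm_triangle_ineq4[of a b] by simp
  qed
  have C2: "UR TYPE('a) \<longleftrightarrow>
      (\<forall>\<epsilon>>0. \<exists>N. \<forall>n\<ge>N. \<forall>x\<in>X\<alpha>. \<forall>x'\<in>X\<alpha>.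
         \<bar>rad_sets (farQ S x (1 / real n)) (farQ S x' (1 / real n))
            - norm (x /\<^sub>R norm x - x' /\<^sub>R norm x')\<bar> \<le> \<epsilon>)"
  proof
    assume "UR TYPE('a)"
    then have P using UR_P by blast
    show "\<forall>\<epsilon>>0. \<exists>N. \<forall>n\<ge>N. \<forall>x\<in>X\<alpha>. \<forall>x'\<in>X\<alpha>.
         \<bar>rad_sets (farQ S x (1 / real n)) (farQ S x' (1 / real n))
            - norm (x /\<^sub>R norm x - x' /\<^sub>R norm x')\<bar> \<le> \<epsilon>"
    proof (intro allI impI)
      fix \<epsilon> :: real assume e: "\<epsilon> > 0"
      then obtain N where N: "\<forall>n\<ge>N. 0 < 1 / real n \<and> (\<forall>x\<in>X\<alpha>. \<forall>y\<in>farQ S x (1 / real n). norm (y + x /\<^sub>R norm x) \<le> \<epsilon>/2)"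
        using PN[OF \<open>P\<close>, of "\<epsilon>/2"] by auto
      have "\<forall>n\<ge>N. \<forall>x\<in>X\<alpha>. \<forall>x'\<in>X\<alpha>.
         \<bar>rad_sets (farQ S x (1 / real n)) (farQ S x' (1 / real n))
            - norm (x /\<^sub>R norm x - x' /\<^sub>R norm x')\<bar> \<le> \<epsilon>"
      proof (intro allI impI ballI)
        fix n x x' assume n: "n \<ge> N" and x: "x \<in> X\<alpha>" and x': "x' \<in> X\<alpha>"
        define u where "u = x /\<^sub>R norm x"
        define u' where "u' = x' /\<^sub>R norm x'"
        let ?A = "{norm (a - b) |a b. a \<in> farQ S x (1 / real n) \<and> b \<in> farQ S x' (1 / real n)}"
        let ?c = "norm (u - u')"
        have pos: "0 < 1 / real n" using N n by blast
        have "- u \<in> farQ S x (1 / real n)" "- u' \<in> farQ S x' (1 / real n)"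
          using nu x x' pos unfolding u_def u'_def by auto
        moreover have "norm (- u - - u') = ?c" by (simp add: norm_minus_commute)
        ultimately have cA: "?c \<in> ?A" by (metis (mono_tags, lifting) mem_Collect_eq)
        have ub: "z \<le> ?c + \<epsilon>" if zA: "z \<in> ?A" for z
        proof -
          obtain a b where ab: "z = norm (a - b)" "a \<in> farQ S x (1 / real n)" "b \<in> farQ S x' (1 / real n)"
            using zA by blast
          have "norm (a + u) \<le> \<epsilon>/2" "norm (b + u') \<le> \<epsilon>/2" using N n ab x x' unfolding u_def u'_def by auto
          then show ?thesis using tri3[of a b u u'] ab(1) by simp
        qed
        have "Sup ?A \<le> ?c + \<epsilon>" using cA ub by (intro cSup_least) auto
        moreover have "bdd_above ?A" using ub by (rule bdd_aboveI)
        then have "?c \<le> Sup ?A" using cA by (intro cSup_upper)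
        ultimately show "\<bar>rad_sets (farQ S x (1 / real n)) (farQ S x' (1 / real n))
            - norm (x /\<^sub>R norm x - x' /\<^sub>R norm x')\<bar> \<le> \<epsilon>"
          unfolding rad_sets_def u_def u'_def using e by simp
      qed
      then show "\<exists>N. \<forall>n\<ge>N. \<forall>x\<in>X\<alpha>. \<forall>x'\<in>X\<alpha>.
         \<bar>rad_sets (farQ S x (1 / real n)) (farQ S x' (1 / real n))
            - norm (x /\<^sub>R norm x - x' /\<^sub>R norm x')\<bar> \<le> \<epsilon>" by blast
    qed
  next
    assume H: "\<forall>\<epsilon>>0. \<exists>N. \<forall>n\<ge>N. \<forall>x\<in>X\<alpha>. \<forall>x'\<in>X\<alpha>.
         \<bar>rad_sets (farQ S x (1 / real n)) (farQ S x' (1 / real n))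
            - norm (x /\<^sub>R norm x - x' /\<^sub>R norm x')\<bar> \<le> \<epsilon>"
    have D unfolding D_def
    proof (intro allI impI)
      fix \<epsilon> :: real assume e: "\<epsilon> > 0"
      then obtain N where N: "\<forall>n\<ge>N. \<forall>x\<in>X\<alpha>. \<forall>x'\<in>X\<alpha>.
         \<bar>rad_sets (farQ S x (1 / real n)) (farQ S x' (1 / real n))
            - norm (x /\<^sub>R norm x - x' /\<^sub>R norm x')\<bar> \<le> \<epsilon>" using H by blast
      define \<delta> where "\<delta> = 1 / real (Suc N)"
      have "\<forall>x::'a. \<alpha> < norm x \<longrightarrow> (\<forall>y\<in>farQ S x \<delta>. \<forall>y'\<in>farQ S x \<delta>. norm (y - y') \<le> \<epsilon>)"
      proof (intro allI impI ballI)
        fix x :: 'a and y y' assume xa: "\<alpha> < norm x" and y: "y \<in> farQ S x \<delta>" and y': "y' \<in> farQ S x \<delta>"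
        have x: "x \<in> X\<alpha>" using xa unfolding X\<alpha>_def by simp
        let ?A = "{norm (a - b) |a b. a \<in> farQ S x \<delta> \<and> b \<in> farQ S x \<delta>}"
        have "norm (y - y') \<in> ?A" using y y' by blast
        moreover have "bdd_above ?A" using n2 by (intro bdd_aboveI[where M=2]) blast
        ultimately have "norm (y - y') \<le> Sup ?A" by (rule cSup_upper)
        moreover have "\<bar>Sup ?A - norm (x /\<^sub>R norm x - x /\<^sub>R norm x)\<bar> \<le> \<epsilon>"
          using N[rule_format, of "Suc N" x x] x unfolding rad_sets_def \<delta>_def by simp
        ultimately show "norm (y - y') \<le> \<epsilon>" by simp
      qed
      moreover have "\<delta> > 0" unfolding \<delta>_def by simp
      ultimately show "\<exists>\<delta>>0. \<forall>x::'a. \<alpha> < norm x \<longrightarrow> (\<forall>y\<in>farQ S x \<delta>. \<forall>y'\<in>farQ S x \<delta>. norm (y - y') \<le> \<epsilon>)"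
        by blast
    qed
    then show "UR TYPE('a)" using UR_D by blast
  qed
  have C3: "UR TYPE('a) \<longleftrightarrow>
      (\<forall>\<epsilon>>0. \<exists>N. \<forall>n\<ge>N. \<forall>x\<in>X\<alpha>. diameter (farQ S x (1 / real n)) \<le> \<epsilon>)"
  proof
    assume "UR TYPE('a)"
    then have P using UR_P by blast
    show "\<forall>\<epsilon>>0. \<exists>N. \<forall>n\<ge>N. \<forall>x\<in>X\<alpha>. diameter (farQ S x (1 / real n)) \<le> \<epsilon>"
    proof (intro allI impI)
      fix \<epsilon> :: real assume e: "\<epsilon> > 0"
      then obtain N where N: "\<forall>n\<ge>N. 0 < 1 / real n \<and> (\<forall>x\<in>X\<alpha>. \<forall>y\<in>farQ S x (1 / real n). norm (y + x /\<^sub>R norm x) \<le> \<epsilon>/2)"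
        using PN[OF \<open>P\<close>, of "\<epsilon>/2"] by auto
      have "\<forall>n\<ge>N. \<forall>x\<in>X\<alpha>. diameter (farQ S x (1 / real n)) \<le> \<epsilon>"
      proof (intro allI impI ballI)
        fix n x assume n: "n \<ge> N" and x: "x \<in> X\<alpha>"
        show "diameter (farQ S x (1 / real n)) \<le> \<epsilon>"
        proof (rule diameter_le)
          show "farQ S x (1 / real n) \<noteq> {} \<or> 0 \<le> \<epsilon>" using e by simp
          fix y y' assume "y \<in> farQ S x (1 / real n)" "y' \<in> farQ S x (1 / real n)"
          then have "norm (y + x /\<^sub>R norm x) \<le> \<epsilon>/2" "norm (y' + x /\<^sub>R norm x) \<le> \<epsilon>/2"
            using N n x by auto
          then show "norm (y - y') \<le> \<epsilon>" using tri2 by fastforce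
        qed
      qed
      then show "\<exists>N. \<forall>n\<ge>N. \<forall>x\<in>X\<alpha>. diameter (farQ S x (1 / real n)) \<le> \<epsilon>" by blast
    qed
  next
    assume H: "\<forall>\<epsilon>>0. \<exists>N. \<forall>n\<ge>N. \<forall>x\<in>X\<alpha>. diameter (farQ S x (1 / real n)) \<le> \<epsilon>"
    have D unfolding D_def
    proof (intro allI impI)
      fix \<epsilon> :: real assume e: "\<epsilon> > 0"
      then obtain N where N: "\<forall>n\<ge>N. \<forall>x\<in>X\<alpha>. diameter (farQ S x (1 / real n)) \<le> \<epsilon>" using H by blast
      define \<delta> where "\<delta> = 1 / real (Suc N)"
      have "\<forall>x::'a. \<alpha> < norm x \<longrightarrow> (\<forall>y\<in>farQ S x \<delta>. \<forall>y'\<in>farQ S x \<delta>. norm (y - y') \<le> \<epsilon>)"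
      proof (intro allI impI ballI)
        fix x :: 'a and y y' assume xa: "\<alpha> < norm x" and y: "y \<in> farQ S x \<delta>" and y': "y' \<in> farQ S x \<delta>"
        have x: "x \<in> X\<alpha>" using xa unfolding X\<alpha>_def by simp
        have "dist y y' \<le> diameter (farQ S x \<delta>)" using diameter_bounded_bound[OF bS y y'] .
        also have "\<dots> \<le> \<epsilon>" using N[rule_format, of "Suc N" x] x unfolding \<delta>_def by simp
        finally show "norm (y - y') \<le> \<epsilon>" by (simp add: dist_norm)
      qed
      moreover have "\<delta> > 0" unfolding \<delta>_def by simp
      ultimately show "\<exists>\<delta>>0. \<forall>x::'a. \<alpha> < norm x \<longrightarrow> (\<forall>y\<in>farQ S x \<delta>. \<forall>y'\<in>farQ S x \<delta>. norm (y - y') \<le> \<epsilon>)"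
        by blast
    qed
    then show "UR TYPE('a)" using UR_D by blast
  qed
  have C4: "UR TYPE('a) \<longleftrightarrow>
      (\<forall>x\<in>X\<alpha>. farQ0 S x = {- (x /\<^sub>R norm x)}) \<and>
      (\<forall>\<epsilon>>0. \<exists>N. \<forall>n\<ge>N. \<forall>x\<in>X\<alpha>. hausd (farQ S x (1 / real n)) (farQ0 S x) \<le> \<epsilon>)"
  proof
    assume "UR TYPE('a)"
    then have P using UR_P by blast
    have "\<forall>\<epsilon>>0. \<exists>N. \<forall>n\<ge>N. \<forall>x\<in>X\<alpha>. hausd (farQ S x (1 / real n)) (farQ0 S x) \<le> \<epsilon>"
    proof (intro allI impI)
      fix \<epsilon> :: real assume e: "\<epsilon> > 0"
      then obtain N where N: "\<forall>n\<ge>N. 0 < 1 / real n \<and> (\<forall>x\<in>X\<alpha>. \<forall>y\<in>farQ S x (1 / real n). norm (y + x /\<^sub>R norm x) \<le> \<epsilon>)"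
        using PN[OF \<open>P\<close>, of "\<epsilon>"] by auto
      have "\<forall>n\<ge>N. \<forall>x\<in>X\<alpha>. hausd (farQ S x (1 / real n)) (farQ0 S x) \<le> \<epsilon>"
      proof (intro allI impI ballI)
        fix n x assume n: "n \<ge> N" and x: "x \<in> X\<alpha>"
        have "- (x /\<^sub>R norm x) \<in> farQ S x (1 / real n)" using nu x N n by auto
        moreover have "\<forall>y\<in>farQ S x (1 / real n). norm (y - - (x /\<^sub>R norm x)) \<le> \<epsilon>" using N n x by auto
        ultimately have "hausd (farQ S x (1 / real n)) {- (x /\<^sub>R norm x)} \<le> \<epsilon>"
          using e by (intro hausd_single_le)
        then show "hausd (farQ S x (1 / real n)) (farQ0 S x) \<le> \<epsilon>" using Q0eq[OF \<open>P\<close> x] by simp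
      qed
      then show "\<exists>N. \<forall>n\<ge>N. \<forall>x\<in>X\<alpha>. hausd (farQ S x (1 / real n)) (farQ0 S x) \<le> \<epsilon>" by blast
    qed
    then show "(\<forall>x\<in>X\<alpha>. farQ0 S x = {- (x /\<^sub>R norm x)}) \<and>
      (\<forall>\<epsilon>>0. \<exists>N. \<forall>n\<ge>N. \<forall>x\<in>X\<alpha>. hausd (farQ S x (1 / real n)) (farQ0 S x) \<le> \<epsilon>)"
      using Q0eq[OF \<open>P\<close>] by blast
  next
    assume "(\<forall>x\<in>X\<alpha>. farQ0 S x = {- (x /\<^sub>R norm x)}) \<and>
      (\<forall>\<epsilon>>0. \<exists>N. \<forall>n\<ge>N. \<forall>x\<in>X\<alpha>. hausd (farQ S x (1 / real n)) (farQ0 S x) \<le> \<epsilon>)"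
    then have Q0: "\<And>x. x \<in> X\<alpha> \<Longrightarrow> farQ0 S x = {- (x /\<^sub>R norm x)}"
      and H: "\<forall>\<epsilon>>0. \<exists>N. \<forall>n\<ge>N. \<forall>x\<in>X\<alpha>. hausd (farQ S x (1 / real n)) (farQ0 S x) \<le> \<epsilon>"
      by blast+
    have D unfolding D_def
    proof (intro allI impI)
      fix \<epsilon> :: real assume e: "\<epsilon> > 0"
      then obtain N where N: "\<forall>n\<ge>N. \<forall>x\<in>X\<alpha>. hausd (farQ S x (1 / real n)) (farQ0 S x) \<le> \<epsilon>/4"
        using H by (metis divide_pos_pos zero_less_numeral)
      define \<delta> where "\<delta> = 1 / real (Suc N)"
      have "\<forall>x::'a. \<alpha> < norm x \<longrightarrow> (\<forall>y\<in>farQ S x \<delta>. \<forall>y'\<in>farQ S x \<delta>. norm (y - y') \<le> \<epsilon>)"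
      proof (intro allI impI ballI)
        fix x :: 'a and y y' assume xa: "\<alpha> < norm x" and y: "y \<in> farQ S x \<delta>" and y': "y' \<in> farQ S x \<delta>"
        have x: "x \<in> X\<alpha>" using xa unfolding X\<alpha>_def by simp
        have "hausd (farQ S x \<delta>) {- (x /\<^sub>R norm x)} \<le> \<epsilon>/4"
          using N[rule_format, of "Suc N" x] Q0[OF x] x unfolding \<delta>_def by simp
        then have hl: "hausd (farQ S x \<delta>) {- (x /\<^sub>R norm x)} < \<epsilon>/2" using e by linarith
        have "- (x /\<^sub>R norm x) \<in> farQ S x \<delta>" using nu x unfolding \<delta>_def by auto
        moreover have "farQ S x \<delta> \<subseteq> sphere 0 1" using QS unfolding S_def by blast
        ultimately obtain r where r: "r < \<epsilon>/2" "\<forall>y\<in>farQ S x \<delta>. norm (y - - (x /\<^sub>R norm x)) \<le> r"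
          using hausd_single_D[OF _ _ hl] by blast
        then have "norm (y + x /\<^sub>R norm x) \<le> r" "norm (y' + x /\<^sub>R norm x) \<le> r" using y y' by auto
        then have "norm (y - y') \<le> r + r" by (rule tri2)
        then show "norm (y - y') \<le> \<epsilon>" using r(1) by simp
      qed
      moreover have "\<delta> > 0" unfolding \<delta>_def by simp
      ultimately show "\<exists>\<delta>>0. \<forall>x::'a. \<alpha> < norm x \<longrightarrow> (\<forall>y\<in>farQ S x \<delta>. \<forall>y'\<in>farQ S x \<delta>. norm (y - y') \<le> \<epsilon>)"
        by blast
    qed
    then show "UR TYPE('a)" using UR_D by blast
  qed
  have C5: "UR TYPE('a) \<longleftrightarrow> USUR S X\<alpha>"
  proof
    assume "UR TYPE('a)"
    then have P using UR_P by blast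
    have "\<forall>\<epsilon>>0. \<exists>\<delta>>0. \<forall>x\<in>X\<alpha>. farQ S x \<delta> \<subseteq> enlarge (farQ0 S x) \<epsilon>"
    proof (intro allI impI)
      fix \<epsilon> :: real assume e: "\<epsilon> > 0"
      then obtain \<delta> where d: "\<delta> > 0" and H: "\<forall>x::'a. \<alpha> < norm x \<longrightarrow> (\<forall>y\<in>farQ S x \<delta>. norm (y + x /\<^sub>R norm x) \<le> \<epsilon>)"
        using \<open>P\<close> unfolding P_def by blast
      have "\<forall>x\<in>X\<alpha>. farQ S x \<delta> \<subseteq> enlarge (farQ0 S x) \<epsilon>"
      proof (intro ballI subsetI)
        fix x y assume x: "x \<in> X\<alpha>" and y: "y \<in> farQ S x \<delta>"
        have "norm (y - - (x /\<^sub>R norm x)) \<le> \<epsilon>" using H x y unfolding X\<alpha>_def by auto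
        then show "y \<in> enlarge (farQ0 S x) \<epsilon>" using Q0eq[OF \<open>P\<close> x] enl_single by metis
      qed
      then show "\<exists>\<delta>>0. \<forall>x\<in>X\<alpha>. farQ S x \<delta> \<subseteq> enlarge (farQ0 S x) \<epsilon>" using d by blast
    qed
    then show "USUR S X\<alpha>" unfolding USUR_def using Q0eq[OF \<open>P\<close>] by blast
  next
    assume U: "USUR S X\<alpha>"
    have Q0: "farQ0 S x = {- (x /\<^sub>R norm x)}" if x: "x \<in> X\<alpha>" for x
    proof -
      obtain y0 where y0: "farQ0 S x = {y0}" using U x unfolding USUR_def by blast
      have "- (x /\<^sub>R norm x) \<in> farQ0 S x" using nu[OF x, of 0] unfolding farQ0_def by simp
      then show ?thesis using y0 by simp
    qed
    have D unfolding D_def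
    proof (intro allI impI)
      fix \<epsilon> :: real assume e: "\<epsilon> > 0"
      then obtain \<delta> where d: "\<delta> > 0" and H: "\<forall>x\<in>X\<alpha>. farQ S x \<delta> \<subseteq> enlarge (farQ0 S x) (\<epsilon>/2)"
        using U unfolding USUR_def by (meson half_gt_zero)
      have "\<forall>x::'a. \<alpha> < norm x \<longrightarrow> (\<forall>y\<in>farQ S x \<delta>. \<forall>y'\<in>farQ S x \<delta>. norm (y - y') \<le> \<epsilon>)"
      proof (intro allI impI ballI)
        fix x :: 'a and y y' assume xa: "\<alpha> < norm x" and y: "y \<in> farQ S x \<delta>" and y': "y' \<in> farQ S x \<delta>"
        have x: "x \<in> X\<alpha>" using xa unfolding X\<alpha>_def by simp
        have "farQ S x \<delta> \<subseteq> enlarge {- (x /\<^sub>R norm x)} (\<epsilon>/2)" using H x Q0[OF x] by metis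
        then have "y \<in> enlarge {- (x /\<^sub>R norm x)} (\<epsilon>/2)" "y' \<in> enlarge {- (x /\<^sub>R norm x)} (\<epsilon>/2)"
          using y y' by blast+
        then have "norm (y + x /\<^sub>R norm x) \<le> \<epsilon>/2" "norm (y' + x /\<^sub>R norm x) \<le> \<epsilon>/2"
          by (simp_all add: enl_single)
        then have "norm (y - y') \<le> \<epsilon>/2 + \<epsilon>/2" by (rule tri2)
        then show "norm (y - y') \<le> \<epsilon>" by simp
      qed
      then show "\<exists>\<delta>>0. \<forall>x::'a. \<alpha> < norm x \<longrightarrow> (\<forall>y\<in>farQ S x \<delta>. \<forall>y'\<in>farQ S x \<delta>. norm (y - y') \<le> \<epsilon>)"
        using d by blast
    qed
    then show "UR TYPE('a)" using UR_D by blast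
  qed
  show ?thesis using C2 C3 C4 C5 by blast
qed

end
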